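(* Assume $\chi(0)<0$ and conditions (C) and (N) hold. Then there exists $\zeta_1\in(0,\zeta_2)$ such that: (1) $G:[0,\infty)\to[0,\infty)$ is continuous, $G(s)>0$ for $s>0$, and the right derivative $G'(0+)$ exists (possibly $+\infty$) and $G'(0+)>1$; (2) $G([\zeta_1,\zeta_2])\subseteq[\zeta_1,\zeta_2]$ and $G([0,\infty))\subseteq[0,\zeta_2]$; (3) $\min_{s\in[\zeta_1,\zeta_2]}G(s)=G(\zeta_1)$, and $G(s)>s$ for all $s\in(0,\zeta_1]$.
   Context: Let $(X,\mu)$ be a finite measure space. Let $K:\mathbb{R}\times X\to[0,\infty)$ be measurable and integrable on $\mathbb{R}\times X$, with $\int_{\mathbb{R}}K(s,\tau)\,ds>0$ for every $\tau$. Let $g:[0,\infty)\times X\to[0,\infty)$ be measurable, with $g(0,\tau)=0$, $g(\cdot,\tau)$ continuous for each $\tau$, and the derivative $g'(0,\tau)$ at $0$ existing and positive. $\chi(z)=1-\int_X\int_{\mathbb{R}}K(s,\tau)g'(0,\tau)e^{-sz}\,ds\,d\mu(\tau)$. Condition (C): for each $\delta>0$ there is a measurable $C_\delta\geq0$ on $X$ with $g(u,\tau)\leq C_\delta(\tau)u$ for $u\in[0,\delta]$ and $\int_X C_\delta(\tau)\left(\int_{\mathbb{R}}K(s,\tau)ds\right)d\mu(\tau)<+\infty$. Condition (N): (N1) there is $\tau_0\in X$ with $\mu(\{\tau_0\})=1$ such that $g(v,\tau)$ is increasing in $v$ for each $\tau\neq\tau_0$ and $g(v,\tau_0)>0$ for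 $v>0$; $\tilde g(v)=\int_{X\setminus\{\tau_0\}}g(v,\tau)\left(\int_{\mathbb{R}}K(s,\tau)ds\right)d\mu(\tau)$. (N2) there is $\zeta_2>0$ such that $\Theta(v)=v-\tilde g(v)$ is strictly increasing on $[0,\zeta_2]$ and $\Theta(\zeta_2)>C\max_{v\geq0}g(v,\tau_0)$, $C=\int_{\mathbb{R}}K(s,\tau_0)ds$. Define $G(v)=\Theta^{-1}(Cg(v,\tau_0))$, $v\geq0$, with $\Theta^{-1}$ the inverse of $\Theta|_{[0,\zeta_2]}$. *)

theory Defs
  imports "HOL-Analysis.Analysis"
begin

definition chi :: "'a measure \<Rightarrow> (real \<Rightarrow> 'a \<Rightarrow> real) \<Rightarrow> ('a \<Rightarrow> real) \<Rightarrow> real \<Rightarrow> real" where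
  "chi M K g' z = 1 - (\<integral>\<tau>. (\<integral>s. K s \<tau> * g' \<tau> * exp (- s * z) \<partial>lborel) \<partial>M)"

definition gtilde :: "'a measure \<Rightarrow> (real \<Rightarrow> 'a \<Rightarrow> real) \<Rightarrow> (real \<Rightarrow> 'a \<Rightarrow> real) \<Rightarrow> 'a \<Rightarrow> real \<Rightarrow> real" where
  "gtilde M K g \<tau>0 v = set_lebesgue_integral M (space M - {\<tau>0}) (\<lambda>\<tau>. g v \<tau> * (\<integral>s. K s \<tau> \<partial>lborel))"

definition Theta :: "'a measure \<Rightarrow> (real \<Rightarrow> 'a \<Rightarrow> real) \<Rightarrow> (real \<Rightarrow> 'a \<Rightarrow> real) \<Rightarrow> 'a \<Rightarrow> real \<Rightarrow> real" where
  "Theta M K g \<tau>0 v = v - gtilde M K g \<tau>0 v"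

definition Gfun :: "'a measure \<Rightarrow> (real \<Rightarrow> 'a \<Rightarrow> real) \<Rightarrow> (real \<Rightarrow> 'a \<Rightarrow> real) \<Rightarrow> 'a \<Rightarrow> real \<Rightarrow> real \<Rightarrow> real" where
  "Gfun M K g \<tau>0 \<zeta>2 v = the_inv_into {0..\<zeta>2} (Theta M K g \<tau>0) ((\<integral>s. K s \<tau>0 \<partial>lborel) * g v \<tau>0)"

end

theory Submission
  imports Defs
begin

theorem lemma1p6:
  fixes M :: "'a measure" and K :: "real \<Rightarrow> 'a \<Rightarrow> real" and g :: "real \<Rightarrow> 'a \<Rightarrow> real"
    and g' :: "'a \<Rightarrow> real" and \<tau>0 :: 'a and \<zeta>2 :: real
  assumes finM: "finite_measure M"
    and K_meas: "(\<lambda>(s, \<tau>). K s \<tau>) \<in> borel_measurable (lborel \<Otimes>\<^sub>M M)"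
    and K_nonneg: "\<And>s \<tau>. \<tau> \<in> space M \<Longrightarrow> K s \<tau> \<ge> 0"
    and K_int: "integrable (lborel \<Otimes>\<^sub>M M) (\<lambda>(s, \<tau>). K s \<tau>)"
    and K_pos: "\<And>\<tau>. \<tau> \<in> space M \<Longrightarrow> (\<integral>s. K s \<tau> \<partial>lborel) > 0"
    and g_meas: "(\<lambda>(u, \<tau>). g u \<tau>) \<in> borel_measurable (restrict_space lborel {0..} \<Otimes>\<^sub>M M)"
    and g_nonneg: "\<And>u \<tau>. u \<ge> 0 \<Longrightarrow> \<tau> \<in> space M \<Longrightarrow> g u \<tau> \<ge> 0"
    and g_zero: "\<And>\<tau>. \<tau> \<in> space M \<Longrightarrow> g 0 \<tau> = 0"
    and g_cont: "\<And>\<tau>. \<tau> \<in> space M \<Longrightarrow> continuous_on {0..} (\<lambda>u. g u \<tau>)"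
    and g_deriv: "\<And>\<tau>. \<tau> \<in> space M \<Longrightarrow> ((\<lambda>u. g u \<tau>) has_real_derivative g' \<tau>) (at 0 within {0..})"
    and g'_pos: "\<And>\<tau>. \<tau> \<in> space M \<Longrightarrow> g' \<tau> > 0"
    and chi0: "chi M K g' 0 < 0"
    and condC: "\<And>\<delta>. \<delta> > 0 \<Longrightarrow> \<exists>C\<delta> \<in> borel_measurable M. (\<forall>\<tau>\<in>space M. C\<delta> \<tau> \<ge> 0)
        \<and> (\<forall>\<tau>\<in>space M. \<forall>u\<in>{0..\<delta>}. g u \<tau> \<le> C\<delta> \<tau> * u)
        \<and> (\<integral>\<^sup>+\<tau>. ennreal (C\<delta> \<tau> * (\<integral>s. K s \<tau> \<partial>lborel)) \<partial>M) < \<infinity>"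
    and N1_pt: "\<tau>0 \<in> space M" "{\<tau>0} \<in> sets M" "emeasure M {\<tau>0} = 1"
    and N1_mono: "\<And>\<tau>. \<tau> \<in> space M \<Longrightarrow> \<tau> \<noteq> \<tau>0 \<Longrightarrow> mono_on {0..} (\<lambda>v. g v \<tau>)"
    and N1_pos: "\<And>v. v > 0 \<Longrightarrow> g v \<tau>0 > 0"
    and N2_pos: "\<zeta>2 > 0"
    and N2_mono: "strict_mono_on {0..\<zeta>2} (Theta M K g \<tau>0)"
    and N2_max: "\<exists>vm\<ge>0. (\<forall>v\<ge>0. g v \<tau>0 \<le> g vm \<tau>0)
        \<and> Theta M K g \<tau>0 \<zeta>2 > (\<integral>s. K s \<tau>0 \<partial>lborel) * g vm \<tau>0"
  shows "\<exists>\<zeta>1. 0 < \<zeta>1 \<and> \<zeta>1 < \<zeta>2 \<and>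
    continuous_on {0..} (Gfun M K g \<tau>0 \<zeta>2) \<and>
    (\<forall>s>0. Gfun M K g \<tau>0 \<zeta>2 s > 0) \<and>
    (\<exists>L::ereal. ((\<lambda>s. ereal ((Gfun M K g \<tau>0 \<zeta>2 s - Gfun M K g \<tau>0 \<zeta>2 0) / s)) \<longlongrightarrow> L) (at_right 0) \<and> L > 1) \<and>
    Gfun M K g \<tau>0 \<zeta>2 ` {\<zeta>1..\<zeta>2} \<subseteq> {\<zeta>1..\<zeta>2} \<and>
    Gfun M K g \<tau>0 \<zeta>2 ` {0..} \<subseteq> {0..\<zeta>2} \<and>
    (\<forall>s\<in>{\<zeta>1..\<zeta>2}. Gfun M K g \<tau>0 \<zeta>2 \<zeta>1 \<le> Gfun M K g \<tau>0 \<zeta>2 s) \<and>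
    (\<forall>s\<in>{0<..\<zeta>1}. Gfun M K g \<tau>0 \<zeta>2 s > s)"
proof -
  define k where "k = (\<lambda>\<tau>. \<integral>s. K s \<tau> \<partial>lborel)"
  define C where "C = k \<tau>0"
  define X' where "X' = space M - {\<tau>0}"
  define Th where "Th = Theta M K g \<tau>0"
  define gt where "gt = gtilde M K g \<tau>0"
  define G where "G = Gfun M K g \<tau>0 \<zeta>2"
  interpret finite_measure M by (rule finM)
  have X'sets: "X' \<in> sets M" unfolding X'_def using N1_pt by auto
  have k_meas: "k \<in> borel_measurable M"
  proof -
    have "(\<lambda>(\<tau>, s). K s \<tau>) \<in> borel_measurable (M \<Otimes>\<^sub>M lborel)"
      using measurable_compose[OF measurable_pair_swap' K_meas] by (simp add: case_prod_beta)
    then show ?thesis unfolding k_def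
      using lborel.borel_measurable_lebesgue_integral[of "\<lambda>\<tau> s. K s \<tau>" M] by simp
  qed
  have k_pos: "\<And>\<tau>. \<tau> \<in> space M \<Longrightarrow> k \<tau> > 0" using K_pos k_def by auto
  have g_meas1: "(\<lambda>\<tau>. g u \<tau>) \<in> borel_measurable M" if "u \<ge> 0" for u
  proof -
    have "(\<lambda>\<tau>. (u, \<tau>)) \<in> measurable M (restrict_space lborel {0..} \<Otimes>\<^sub>M M)"
      using that by (intro measurable_Pair) (auto simp: space_restrict_space)
    from measurable_compose[OF this g_meas] show ?thesis by simp
  qed
  have Ck_int: "integrable M (\<lambda>\<tau>. C\<delta> \<tau> * k \<tau>)"
    if "C\<delta> \<in> borel_measurable M" "\<forall>\<tau>\<in>space M. C\<delta> \<tau> \<ge> 0"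
       "(\<integral>\<^sup>+\<tau>. ennreal (C\<delta> \<tau> * (\<integral>s. K s \<tau> \<partial>lborel)) \<partial>M) < \<infinity>" for C\<delta>
  proof (rule integrableI_bounded)
    show "(\<lambda>\<tau>. C\<delta> \<tau> * k \<tau>) \<in> borel_measurable M" using that k_meas by measurable
    have "(\<integral>\<^sup>+\<tau>. ennreal (norm (C\<delta> \<tau> * k \<tau>)) \<partial>M) = (\<integral>\<^sup>+\<tau>. ennreal (C\<delta> \<tau> * (\<integral>s. K s \<tau> \<partial>lborel)) \<partial>M)"
      using that(2) k_pos unfolding k_def
      by (intro nn_integral_cong) (auto simp: abs_mult less_imp_le)
    then show "(\<integral>\<^sup>+\<tau>. ennreal (norm (C\<delta> \<tau> * k \<tau>)) \<partial>M) < \<infinity>" using that(3) by simp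
  qed
  have gk_int: "integrable M (\<lambda>\<tau>. g u \<tau> * k \<tau>)" if "u \<ge> 0" for u
  proof -
    have u1: "u + 1 > 0" using that by simp
    from condC[OF u1] obtain C\<delta> where C\<delta>: "C\<delta> \<in> borel_measurable M" "\<forall>\<tau>\<in>space M. C\<delta> \<tau> \<ge> 0"
        "\<forall>\<tau>\<in>space M. \<forall>v\<in>{0..u+1}. g v \<tau> \<le> C\<delta> \<tau> * v"
        "(\<integral>\<^sup>+\<tau>. ennreal (C\<delta> \<tau> * (\<integral>s. K s \<tau> \<partial>lborel)) \<partial>M) < \<infinity>"
      by blast
    have "integrable M (\<lambda>\<tau>. u * (C\<delta> \<tau> * k \<tau>))"
      using Ck_int[OF C\<delta>(1,2,4)] by simp
    then show ?thesis
    proof (rule Bochner_Integration.integrable_bound)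
      show "(\<lambda>\<tau>. g u \<tau> * k \<tau>) \<in> borel_measurable M" using g_meas1[OF that] k_meas by measurable
      show "AE \<tau> in M. norm (g u \<tau> * k \<tau>) \<le> norm (u * (C\<delta> \<tau> * k \<tau>))"
      proof (rule AE_I2)
        fix \<tau> assume t: "\<tau> \<in> space M"
        have "g u \<tau> \<le> C\<delta> \<tau> * u" using C\<delta>(3) t that by auto
        moreover have "0 \<le> g u \<tau>" using g_nonneg t that by auto
        moreover have "0 < k \<tau>" using k_pos t by auto
        ultimately show "norm (g u \<tau> * k \<tau>) \<le> norm (u * (C\<delta> \<tau> * k \<tau>))"
          using that C\<delta>(2) t by (auto simp: abs_mult mult.commute intro!: mult_right_mono)
      qed
    qed
  qed
  have gk_sint: "set_integrable M X' (\<lambda>\<tau>. g u \<tau> * k \<tau>)" if "u \<ge> 0" for u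
    unfolding set_integrable_def using integrable_mult_indicator[OF X'sets gk_int[OF that]] .
  have gt_eq: "gt v = (LINT \<tau>:X'|M. g v \<tau> * k \<tau>)" for v
    unfolding gt_def gtilde_def X'_def k_def ..
  have gt_mono: "gt x \<le> gt y" if "0 \<le> x" "x \<le> y" for x y
    unfolding gt_eq
  proof (rule set_integral_mono)
    show "set_integrable M X' (\<lambda>\<tau>. g x \<tau> * k \<tau>)" using gk_sint that by simp
    show "set_integrable M X' (\<lambda>\<tau>. g y \<tau> * k \<tau>)" using gk_sint that by simp
    fix \<tau> assume "\<tau> \<in> X'"
    then have t: "\<tau> \<in> space M" "\<tau> \<noteq> \<tau>0" by (auto simp: X'_def)
    then have "g x \<tau> \<le> g y \<tau>" using mono_onD[OF N1_mono[OF t]] that by auto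
    then show "g x \<tau> * k \<tau> \<le> g y \<tau> * k \<tau>" using k_pos[OF t(1)] by (intro mult_right_mono) auto
  qed
  have gt0: "gt 0 = 0"
  proof -
    have "(\<lambda>\<tau>. indicator X' \<tau> *\<^sub>R (g 0 \<tau> * k \<tau>)) = (\<lambda>_. 0::real)"
      by (rule ext) (auto simp: X'_def g_zero split: split_indicator)
    then show ?thesis unfolding gt_eq set_lebesgue_integral_def by simp
  qed
  have Th_eq: "Th v = v - gt v" for v unfolding Th_def gt_def Theta_def ..
  have Th0: "Th 0 = 0" using gt0 Th_eq by simp
  have N2m: "strict_mono_on {0..\<zeta>2} Th" using N2_mono Th_def by simp
  have Th_lip1: "0 \<le> Th y - Th x \<and> Th y - Th x \<le> y - x" if "0 \<le> x" "x \<le> y" "y \<le> \<zeta>2" for x y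
  proof
    show "0 \<le> Th y - Th x" using strict_mono_on_leD[OF N2m, of x y] that by auto
    show "Th y - Th x \<le> y - x" using gt_mono[of x y] that Th_eq by auto
  qed
  have Th_lip: "\<bar>Th x - Th y\<bar> \<le> \<bar>x - y\<bar>" if "x \<in> {0..\<zeta>2}" "y \<in> {0..\<zeta>2}" for x y
  proof (cases "x \<le> y")
    case True then show ?thesis using Th_lip1[of x y] that by auto
  next
    case False then show ?thesis using Th_lip1[of y x] that by auto
  qed
  have Th_cont: "continuous_on {0..\<zeta>2} Th"
    unfolding continuous_on_iff
  proof (intro ballI allI impI)
    fix x e assume x: "x \<in> {0..\<zeta>2}" and e: "(0::real) < e"
    show "\<exists>d>0. \<forall>x'\<in>{0..\<zeta>2}. dist x' x < d \<longrightarrow> dist (Th x') (Th x) < e"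
    proof (intro exI[of _ e] conjI ballI impI)
      fix x' assume x': "x' \<in> {0..\<zeta>2}" and d: "dist x' x < e"
      show "dist (Th x') (Th x) < e" using Th_lip[OF x' x] d by (simp add: dist_real_def)
    qed (use e in auto)
  qed
  have Th_inj: "inj_on Th {0..\<zeta>2}" using strict_mono_on_imp_inj_on[OF N2m] .
  have Th_img: "Th ` {0..\<zeta>2} = {0..Th \<zeta>2}"
  proof
    show "Th ` {0..\<zeta>2} \<subseteq> {0..Th \<zeta>2}"
      using strict_mono_on_leD[OF N2m] Th0 N2_pos by auto (metis atLeastAtMost_iff order.refl)+
    show "{0..Th \<zeta>2} \<subseteq> Th ` {0..\<zeta>2}"
    proof
      fix y assume y: "y \<in> {0..Th \<zeta>2}"
      obtain x where "0 \<le> x" "x \<le> \<zeta>2" "Th x = y"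
        using IVT'[of Th 0 y \<zeta>2] y Th0 N2_pos Th_cont by auto
      then show "y \<in> Th ` {0..\<zeta>2}" by auto
    qed
  qed
  define Ti where "Ti = the_inv_into {0..\<zeta>2} Th"
  have Ti_Th: "Ti (Th x) = x" if "x \<in> {0..\<zeta>2}" for x
    unfolding Ti_def using the_inv_into_f_f[OF Th_inj that] .
  have Th_Ti: "Th (Ti y) = y" if "y \<in> {0..Th \<zeta>2}" for y
    unfolding Ti_def using f_the_inv_into_f[OF Th_inj] that Th_img by auto
  have Ti_in: "Ti y \<in> {0..\<zeta>2}" if "y \<in> {0..Th \<zeta>2}" for y
    unfolding Ti_def using the_inv_into_into[OF Th_inj, of y "{0..\<zeta>2}"] that Th_img by auto
  have Ti_cont: "continuous_on {0..Th \<zeta>2} Ti"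
    using continuous_on_inv[OF Th_cont compact_Icc, of Ti] Ti_Th Th_img by auto
  have Ti_pos: "0 < Ti y" if "0 < y" "y \<le> Th \<zeta>2" for y
  proof -
    have "Ti y \<noteq> 0" using Th_Ti[of y] that Th0 by auto
    then show ?thesis using Ti_in[of y] that by auto
  qed
  have Ti_lt: "Ti y < \<zeta>2" if "0 \<le> y" "y < Th \<zeta>2" for y
  proof -
    have "Ti y \<noteq> \<zeta>2" using Th_Ti[of y] that by auto
    then show ?thesis using Ti_in[of y] that by auto
  qed
  obtain vm where vm: "vm \<ge> 0" "\<forall>v\<ge>0. g v \<tau>0 \<le> g vm \<tau>0" "Th \<zeta>2 > C * g vm \<tau>0"
    using N2_max unfolding C_def k_def Th_def by blast
  have C_pos: "C > 0" unfolding C_def using k_pos N1_pt by auto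
  have G_eq: "G s = Ti (C * g s \<tau>0)" for s unfolding G_def Gfun_def Ti_def Th_def C_def k_def ..
  have gC_range: "C * g s \<tau>0 \<in> {0..<Th \<zeta>2}" if "s \<ge> 0" for s
  proof -
    have "g s \<tau>0 \<le> g vm \<tau>0" "0 \<le> g s \<tau>0" using vm(2) that g_nonneg N1_pt by auto
    then have h: "C * g s \<tau>0 \<le> C * g vm \<tau>0" using C_pos by (intro mult_left_mono) auto
    have h2: "0 \<le> C * g s \<tau>0" using C_pos \<open>0 \<le> g s \<tau>0\<close> by simp
    show ?thesis using vm(3) h h2 unfolding atLeastLessThan_iff by linarith
  qed
  have G_range: "G s \<in> {0..<\<zeta>2}" if "s \<ge> 0" for s
  proof -
    have r: "C * g s \<tau>0 \<in> {0..<Th \<zeta>2}" using gC_range[OF that] .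
    then have "Ti (C * g s \<tau>0) \<in> {0..\<zeta>2}" by (intro Ti_in) auto
    moreover have "Ti (C * g s \<tau>0) < \<zeta>2" using r by (intro Ti_lt) auto
    ultimately show ?thesis unfolding G_eq by simp
  qed
  have G0: "G 0 = 0"
  proof -
    have "C * g 0 \<tau>0 = Th 0" using g_zero[OF N1_pt(1)] Th0 by simp
    then show ?thesis unfolding G_eq using Ti_Th[of 0] N2_pos by simp
  qed
  have G_pos: "G s > 0" if "s > 0" for s
  proof -
    have "C * g s \<tau>0 > 0" using N1_pos[OF that] C_pos by simp
    moreover have "C * g s \<tau>0 \<le> Th \<zeta>2" using gC_range[of s] that by simp
    ultimately show ?thesis unfolding G_eq by (rule Ti_pos)
  qed
  have G_cont: "continuous_on {0..} G"
  proof -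
    have "continuous_on {0..} (\<lambda>s. C * g s \<tau>0)"
      using g_cont[OF N1_pt(1)] by (intro continuous_intros)
    moreover have "(\<lambda>s. C * g s \<tau>0) ` {0..} \<subseteq> {0..Th \<zeta>2}" using gC_range by fastforce
    ultimately have "continuous_on {0..} (\<lambda>s. Ti (C * g s \<tau>0))"
      by (rule continuous_on_compose2[OF Ti_cont])
    moreover have "G = (\<lambda>s. Ti (C * g s \<tau>0))" using G_eq by (simp add: fun_eq_iff)
    ultimately show ?thesis by simp
  qed
  have Th_G: "Th (G s) = C * g s \<tau>0" if "s \<ge> 0" for s
    unfolding G_eq using gC_range[OF that] by (intro Th_Ti) auto
  have dq: "((\<lambda>u. g u \<tau> / u) \<longlongrightarrow> g' \<tau>) (at_right 0)" if t: "\<tau> \<in> space M" for \<tau>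
  proof -
    have "((\<lambda>y. (g y \<tau> - g 0 \<tau>) / (y - 0)) \<longlongrightarrow> g' \<tau>) (at 0 within {0..})"
      using g_deriv[OF t] unfolding has_field_derivative_iff .
    then have "((\<lambda>y. (g y \<tau> - g 0 \<tau>) / (y - 0)) \<longlongrightarrow> g' \<tau>) (at 0 within {0<..})"
      by (rule tendsto_within_subset) auto
    then show ?thesis using g_zero[OF t] by simp
  qed
  have dq_top: "((\<lambda>t. g (inverse t) \<tau> * t) \<longlongrightarrow> g' \<tau>) at_top" if t: "\<tau> \<in> space M" for \<tau>
    using dq[OF t] unfolding filterlim_at_right_to_top by (simp add: divide_inverse)
  have g'_meas: "g' \<in> borel_measurable M"
  proof (rule borel_measurable_LIMSEQ_real[where u="\<lambda>i \<tau>. g (inverse (real i)) \<tau> * real i"])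
    fix \<tau> assume t: "\<tau> \<in> space M"
    show "(\<lambda>i. g (inverse (real i)) \<tau> * real i) \<longlonglongrightarrow> g' \<tau>"
      by (rule filterlim_compose[OF dq_top[OF t] filterlim_real_sequentially])
  next
    fix i
    show "(\<lambda>\<tau>. g (inverse (real i)) \<tau> * real i) \<in> borel_measurable M"
      using g_meas1[of "inverse (real i)"] by measurable
  qed
  obtain C1 where C1: "C1 \<in> borel_measurable M" "\<forall>\<tau>\<in>space M. C1 \<tau> \<ge> 0"
        "\<forall>\<tau>\<in>space M. \<forall>v\<in>{0..1}. g v \<tau> \<le> C1 \<tau> * v"
        "(\<integral>\<^sup>+\<tau>. ennreal (C1 \<tau> * (\<integral>s. K s \<tau> \<partial>lborel)) \<partial>M) < \<infinity>"
    using condC[of 1] by auto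
  define I' where "I' = (\<integral>\<tau>. indicator X' \<tau> * (g' \<tau> * k \<tau>) \<partial>M)"
  define sf where "sf = (\<lambda>t \<tau>. if t > 0 then indicator X' \<tau> * (g (inverse t) \<tau> * k \<tau> * t) else (0::real))"
  have DCT: "((\<lambda>t. \<integral>\<tau>. sf t \<tau> \<partial>M) \<longlongrightarrow> I') at_top"
    unfolding I'_def
  proof (rule integral_dominated_convergence_at_top[where w="\<lambda>\<tau>. C1 \<tau> * k \<tau>"])
    show "(\<lambda>\<tau>. indicator X' \<tau> * (g' \<tau> * k \<tau>)) \<in> borel_measurable M"
      using g'_meas k_meas X'sets by measurable
    show "sf t \<in> borel_measurable M" for t
    proof (cases "t > 0")
      case True
      then have "(\<lambda>\<tau>. g (inverse t) \<tau>) \<in> borel_measurable M" using g_meas1 by simp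
      then show ?thesis using True k_meas X'sets unfolding sf_def by simp measurable
    next
      case False then show ?thesis unfolding sf_def by simp
    qed
    show "integrable M (\<lambda>\<tau>. C1 \<tau> * k \<tau>)" using Ck_int[OF C1(1,2,4)] .
    show "AE \<tau> in M. ((\<lambda>t. sf t \<tau>) \<longlongrightarrow> indicator X' \<tau> * (g' \<tau> * k \<tau>)) at_top"
    proof (rule AE_I2)
      fix \<tau> assume t: "\<tau> \<in> space M"
      have "((\<lambda>t. indicator X' \<tau> * (g (inverse t) \<tau> * t * k \<tau>)) \<longlongrightarrow> indicator X' \<tau> * (g' \<tau> * k \<tau>)) at_top"
        by (intro tendsto_mult tendsto_const dq_top[OF t])
      moreover have "\<forall>\<^sub>F t in at_top. indicator X' \<tau> * (g (inverse t) \<tau> * t * k \<tau>) = sf t \<tau>"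
        using eventually_gt_at_top[of 0] by eventually_elim (simp add: sf_def mult_ac)
      ultimately show "((\<lambda>t. sf t \<tau>) \<longlongrightarrow> indicator X' \<tau> * (g' \<tau> * k \<tau>)) at_top"
        by (rule Lim_transform_eventually)
    qed
    show "\<forall>\<^sub>F t in at_top. AE \<tau> in M. norm (sf t \<tau>) \<le> C1 \<tau> * k \<tau>"
      using eventually_ge_at_top[of 1]
    proof eventually_elim
      case (elim t)
      show ?case
      proof (rule AE_I2)
        fix \<tau> assume t: "\<tau> \<in> space M"
        have kp: "0 < k \<tau>" using k_pos[OF t] .
        have c0: "0 \<le> C1 \<tau>" using C1(2) t by auto
        have it: "inverse t \<in> {0..1}" using elim by (auto simp: inverse_le_1_iff)
        have gle: "g (inverse t) \<tau> \<le> C1 \<tau> * inverse t" using C1(3) t it by auto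
        have g0: "0 \<le> g (inverse t) \<tau>" using g_nonneg t elim by auto
        have "g (inverse t) \<tau> * t \<le> C1 \<tau> * inverse t * t"
          using gle elim by (intro mult_right_mono) auto
        also have "\<dots> = C1 \<tau>" using elim by simp
        finally have "g (inverse t) \<tau> * t * k \<tau> \<le> C1 \<tau> * k \<tau>"
          using kp by (intro mult_right_mono) auto
        moreover have "0 \<le> g (inverse t) \<tau> * t * k \<tau>" using g0 elim kp by simp
        ultimately show "norm (sf t \<tau>) \<le> C1 \<tau> * k \<tau>"
          using elim c0 kp unfolding sf_def by (auto simp: mult_ac split: split_indicator)
      qed
    qed
  qed
  have sf_eq: "(\<integral>\<tau>. sf t \<tau> \<partial>M) = gt (inverse t) * t" if "t > 0" for t
  proof -
    have "(\<integral>\<tau>. sf t \<tau> \<partial>M) = (\<integral>\<tau>. indicator X' \<tau> *\<^sub>R (g (inverse t) \<tau> * k \<tau>) * t \<partial>M)"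
      using that unfolding sf_def by (intro Bochner_Integration.integral_cong) auto
    also have "\<dots> = gt (inverse t) * t"
      unfolding gt_eq set_lebesgue_integral_def by (rule integral_mult_left_zero)
    finally show ?thesis .
  qed
  have gt_lim: "((\<lambda>v. gt v / v) \<longlongrightarrow> I') (at_right 0)"
    unfolding filterlim_at_right_to_top
  proof (rule Lim_transform_eventually[OF DCT])
    show "\<forall>\<^sub>F t in at_top. (\<integral>\<tau>. sf t \<tau> \<partial>M) = gt (inverse t) / inverse t"
      using eventually_gt_at_top[of 0] by eventually_elim (simp add: sf_eq divide_inverse)
  qed
  define a where "a = 1 - I'"
  have Th_lim: "((\<lambda>v. Th v / v) \<longlongrightarrow> a) (at_right 0)"
  proof (rule Lim_transform_eventually)
    show "((\<lambda>v. 1 - gt v / v) \<longlongrightarrow> a) (at_right 0)" unfolding a_def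
      by (intro tendsto_diff tendsto_const gt_lim)
    show "\<forall>\<^sub>F v in at_right 0. 1 - gt v / v = Th v / v"
      using eventually_at_right_less[of "0::real"]
      by eventually_elim (simp add: Th_eq diff_divide_distrib)
  qed
  have a_nonneg: "0 \<le> a"
  proof (rule tendsto_lowerbound[OF Th_lim])
    have "\<forall>\<^sub>F v in at_right 0. v < \<zeta>2" using N2_pos eventually_at_right_field by blast
    then show "\<forall>\<^sub>F v in at_right 0. 0 \<le> Th v / v"
      using eventually_at_right_less[of "0::real"]
    proof eventually_elim
      case (elim v)
      then have "Th 0 < Th v" using strict_mono_onD[OF N2m, of 0 v] by auto
      then show ?case using Th0 elim by simp
    qed
  qed simp
  have chi_eq: "chi M K g' 0 = 1 - (\<integral>\<tau>. k \<tau> * g' \<tau> \<partial>M)"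
    unfolding chi_def k_def by simp
  have kg_int: "integrable M (\<lambda>\<tau>. k \<tau> * g' \<tau>)"
  proof (rule ccontr)
    assume "\<not> ?thesis"
    then have "(\<integral>\<tau>. k \<tau> * g' \<tau> \<partial>M) = 0" by (rule not_integrable_integral_eq)
    then show False using chi0 chi_eq by simp
  qed
  have split: "(\<integral>\<tau>. k \<tau> * g' \<tau> \<partial>M) = C * g' \<tau>0 + I'"
  proof -
    have i1: "integrable M (\<lambda>\<tau>. k \<tau> * g' \<tau> * indicator {\<tau>0} \<tau>)"
      using integrable_real_mult_indicator[OF N1_pt(2) kg_int] .
    have i2: "integrable M (\<lambda>\<tau>. k \<tau> * g' \<tau> * indicator X' \<tau>)"
      using integrable_real_mult_indicator[OF X'sets kg_int] .
    have "(\<integral>\<tau>. k \<tau> * g' \<tau> \<partial>M) = (\<integral>\<tau>. k \<tau> * g' \<tau> * indicator {\<tau>0} \<tau> + k \<tau> * g' \<tau> * indicator X' \<tau> \<partial>M)"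
      by (intro Bochner_Integration.integral_cong) (auto simp: X'_def split: split_indicator)
    also have "\<dots> = (\<integral>\<tau>. k \<tau> * g' \<tau> * indicator {\<tau>0} \<tau> \<partial>M) + (\<integral>\<tau>. k \<tau> * g' \<tau> * indicator X' \<tau> \<partial>M)"
      using i1 i2 by (rule Bochner_Integration.integral_add)
    also have "(\<integral>\<tau>. k \<tau> * g' \<tau> * indicator {\<tau>0} \<tau> \<partial>M) = (\<integral>\<tau>. indicator {\<tau>0} \<tau> * (C * g' \<tau>0) \<partial>M)"
      by (intro Bochner_Integration.integral_cong) (auto simp: C_def split: split_indicator)
    also have "\<dots> = C * g' \<tau>0"
    proof -
      have "measure M {\<tau>0} = 1" using N1_pt(3) by (simp add: measure_def)
      then show ?thesis using N1_pt(1) by simp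
    qed
    also have "(\<integral>\<tau>. k \<tau> * g' \<tau> * indicator X' \<tau> \<partial>M) = I'"
      unfolding I'_def by (intro Bochner_Integration.integral_cong) (auto simp: mult_ac)
    finally show ?thesis .
  qed
  have b_gt: "C * g' \<tau>0 > a" using chi0 chi_eq split a_def by simp
  have b_pos: "C * g' \<tau>0 > 0" using C_pos g'_pos N1_pt(1) by simp
  have gs_lim: "((\<lambda>s. C * g s \<tau>0 / s) \<longlongrightarrow> C * g' \<tau>0) (at_right 0)"
    using tendsto_mult[OF tendsto_const[of C] dq[OF N1_pt(1)]] by simp
  have G_filt: "filterlim G (at_right 0) (at_right 0)"
    unfolding filterlim_at
  proof
    show "\<forall>\<^sub>F s in at_right 0. G s \<in> {0<..} \<and> G s \<noteq> 0"
      using eventually_at_right_less[of "0::real"] by eventually_elim (use G_pos in force)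
    have "(G \<longlongrightarrow> G 0) (at 0 within {0..})"
      using G_cont unfolding continuous_on_def by auto
    then have "(G \<longlongrightarrow> G 0) (at 0 within {0<..})"
      by (rule tendsto_within_subset) auto
    then show "(G \<longlongrightarrow> 0) (at_right 0)" using G0 by simp
  qed
  have ThG_lim: "((\<lambda>s. Th (G s) / G s) \<longlongrightarrow> a) (at_right 0)"
    using filterlim_compose[OF Th_lim G_filt] by simp
  have quot: "G s / s = (C * g s \<tau>0 / s) * inverse (Th (G s) / G s)" if "s > 0" for s
  proof -
    have "C * g s \<tau>0 > 0" using N1_pos[OF that] C_pos by simp
    then show ?thesis using Th_G[of s] G_pos[OF that] that N1_pos[OF that] C_pos by (simp add: field_simps)
  qed
  have ThG_pos: "\<forall>\<^sub>F s in at_right 0. 0 < Th (G s) / G s"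
    using eventually_at_right_less[of "0::real"]
  proof eventually_elim
    case (elim s)
    have "C * g s \<tau>0 > 0" using N1_pos[OF elim] C_pos by simp
    then show ?case using Th_G[of s] G_pos[OF elim] elim by simp
  qed
  have Glim: "\<exists>L::ereal. ((\<lambda>s. ereal ((G s - G 0) / s)) \<longlongrightarrow> L) (at_right 0) \<and> L > 1"
  proof (cases "a = 0")
    case True
    have "LIM s at_right 0. (C * g s \<tau>0 / s) * inverse (Th (G s) / G s) :> at_top"
      by (rule filterlim_tendsto_pos_mult_at_top[OF gs_lim b_pos filterlim_inverse_at_top])
         (use ThG_lim True ThG_pos in auto)
    then have "LIM s at_right 0. G s / s :> at_top"
      by (rule filterlim_cong[THEN iffD1, rotated -1]) 
         (use eventually_at_right_less[of "0::real"] in \<open>auto elim!: eventually_mono simp: quot\<close>)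
    then have "((\<lambda>s. ereal ((G s - G 0) / s)) \<longlongrightarrow> \<infinity>) (at_right 0)"
      using G0 tendsto_PInfty_eq_at_top[of "\<lambda>s. G s / s" "at_right 0"] by simp
    then show ?thesis by (intro exI[of _ \<infinity>]) simp
  next
    case False
    then have ap: "a > 0" using a_nonneg by simp
    have "((\<lambda>s. (C * g s \<tau>0 / s) * inverse (Th (G s) / G s)) \<longlongrightarrow> C * g' \<tau>0 * inverse a) (at_right 0)"
      by (intro tendsto_mult gs_lim tendsto_inverse ThG_lim) (use ap in simp)
    then have "((\<lambda>s. (G s - G 0) / s) \<longlongrightarrow> C * g' \<tau>0 * inverse a) (at_right 0)"
      by (rule Lim_transform_eventually)
         (use eventually_at_right_less[of "0::real"] in \<open>auto elim!: eventually_mono simp: quot G0\<close>)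
    moreover have "C * g' \<tau>0 * inverse a > 1" using b_gt ap by (simp add: field_simps)
    ultimately show ?thesis by (intro exI[of _ "ereal (C * g' \<tau>0 * inverse a)"]) simp
  qed
  obtain L :: ereal where L: "((\<lambda>s. ereal ((G s - G 0) / s)) \<longlongrightarrow> L) (at_right 0)" "L > 1"
    using Glim by blast
  have "\<forall>\<^sub>F s in at_right 0. ereal ((G s - G 0) / s) > 1" using order_tendstoD(1)[OF L(1) L(2)] .
  then obtain \<epsilon> where \<epsilon>: "\<epsilon> > 0" "\<forall>y>0. y < \<epsilon> \<longrightarrow> ereal ((G y - G 0) / y) > 1"
    unfolding eventually_at_right_field by auto
  have Ggt: "G y > y" if "0 < y" "y < \<epsilon>" for y
  proof -
    have "1 < G y / y" using \<epsilon>(2) that G0 by auto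
    then show ?thesis using that by (simp add: less_divide_eq)
  qed
  define t0 where "t0 = min (\<epsilon>/2) (\<zeta>2/2)"
  have t0: "0 < t0" "t0 < \<epsilon>" "t0 < \<zeta>2" using \<epsilon>(1) N2_pos unfolding t0_def by auto
  have Gc: "continuous_on {a..b} G" if "0 \<le> a" for a b
    using continuous_on_subset[OF G_cont] that by auto
  obtain x0 where x0: "x0 \<in> {t0..\<zeta>2}" "\<forall>y\<in>{t0..\<zeta>2}. G x0 \<le> G y"
    using continuous_attains_inf[OF compact_Icc, of t0 \<zeta>2 G] t0 Gc[of t0 \<zeta>2] by auto
  define \<mu> where "\<mu> = G x0"
  have \<mu>pos: "\<mu> > 0" unfolding \<mu>_def using G_pos x0 t0 by auto
  define S where "S = {0..t0} \<inter> G -` {..\<mu>}"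
  have Sclosed: "closed S" unfolding S_def
    by (rule continuous_closed_preimage) (use Gc in auto)
  have S0: "0 \<in> S" using G0 \<mu>pos t0 unfolding S_def by auto
  have bdd: "bdd_above S" unfolding S_def by (rule bdd_aboveI[of _ t0]) auto
  define \<zeta>1 where "\<zeta>1 = Sup S"
  have \<zeta>1S: "\<zeta>1 \<in> S" unfolding \<zeta>1_def using closed_contains_Sup[OF _ bdd Sclosed] S0 by auto
  have upper: "y \<le> \<zeta>1" if "y \<in> S" for y unfolding \<zeta>1_def using cSup_upper[OF that bdd] .
  have "G t0 \<ge> \<mu>" using x0 t0 unfolding \<mu>_def by auto
  then obtain x1 where x1: "0 \<le> x1" "x1 \<le> t0" "G x1 = \<mu>"
    using IVT'[of G 0 \<mu> t0] G0 \<mu>pos t0 Gc[of 0 t0] by auto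
  have "x1 \<in> S" using x1 unfolding S_def by auto
  moreover have "x1 \<noteq> 0" using x1 G0 \<mu>pos by auto
  ultimately have z1pos: "\<zeta>1 > 0" using upper x1 by force
  have z1le: "\<zeta>1 \<le> t0" "G \<zeta>1 \<le> \<mu>" using \<zeta>1S unfolding S_def by auto
  have minG: "\<forall>s\<in>{\<zeta>1..\<zeta>2}. G \<zeta>1 \<le> G s"
  proof
    fix s assume s: "s \<in> {\<zeta>1..\<zeta>2}"
    show "G \<zeta>1 \<le> G s"
    proof (cases "s \<le> t0")
      case True
      show ?thesis
      proof (cases "s \<in> S")
        case True then show ?thesis using upper[OF True] s by auto
      next
        case False
        then have "G s > \<mu>" using True s z1pos unfolding S_def by auto
        then show ?thesis using z1le by simp
      qed
    next
      case False
      then have "G s \<ge> \<mu>" using x0 s unfolding \<mu>_def by auto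
      then show ?thesis using z1le by simp
    qed
  qed
  have Gz1: "G \<zeta>1 > \<zeta>1" using Ggt[of \<zeta>1] z1pos z1le t0 by simp
  have img1: "G ` {\<zeta>1..\<zeta>2} \<subseteq> {\<zeta>1..\<zeta>2}"
  proof
    fix y assume "y \<in> G ` {\<zeta>1..\<zeta>2}"
    then obtain s where s: "s \<in> {\<zeta>1..\<zeta>2}" "y = G s" by auto
    have "G s \<ge> G \<zeta>1" using minG s by auto
    moreover have "G s < \<zeta>2" using G_range[of s] s z1pos by auto
    ultimately show "y \<in> {\<zeta>1..\<zeta>2}" using s Gz1 by auto
  qed
  have img2: "G ` {0..} \<subseteq> {0..\<zeta>2}" using G_range by fastforce
  have below: "\<forall>s\<in>{0<..\<zeta>1}. G s > s" using Ggt z1le t0 by auto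
  have "\<zeta>1 < \<zeta>2" using z1le t0 by simp
  then show ?thesis unfolding G_def[symmetric]
    using z1pos G_cont G_pos Glim img1 img2 minG below by blast
qed

end
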